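(* Let $H$ be an Abelian group, $X$ a simplicial set, $Z\subset X$ a simplicial subset with inclusion $i:Z\to X$, and $j:X\to X/Z$ the quotient map collapsing $Z$ to a point. Let $\beta:(X/Z)_2\to H$ be a normalized 2-cocycle, let $\eta$ be the $N(H)$-valued twisting function on $X/Z$ associated to $\beta$, and let $\eta|_X=\eta\circ j$. Let $\mathrm{sDist}_\eta(X/Z)$ be the set of twisted distributions on $\pi_\eta: N(H)\times_\eta X/Z\to X/Z$, and let $\mathrm{sDist}_\eta(X,0)$ be the set of twisted distributions $p$ on $N(H)\times_{\eta|_X}X\to X$ such that $p\circ i=\delta^{\varphi_0}$, where $\varphi_0(z)=(0,z)$ is the zero section over $Z$. Then there is a convex isomorphism (a bijection preserving convex combinations) \[ \mathrm{sDist}_\eta(X/Z)\cong \mathrm{sDist}_\eta(X,0). \]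
   Context: Distributions take values in $R=\mathbb{R}_{\ge 0}$: $D(S)$ is the set of finitely supported $p:S\to\mathbb{R}_{\ge0}$ with $\sum_s p(s)=1$, extended levelwise to simplicial sets. For a simplicial map $\pi:E\to Y$, a (twisted) distribution on $\pi$ is a simplicial map $p:Y\to D(E)$ with $D(\pi)\circ p=\delta$ ($\delta$ = delta distribution). $N(H)$ is the nerve of $H$: $N(H)_n=H^n$, $d_0$ drops the first entry, $d_n$ drops the last, $d_i(a_1,\dots,a_n)=(\dots,a_i+a_{i+1},\dots)$ for $0<i<n$, $s_j$ inserts $0$ after the $j$-th entry. A twisting function $\eta=\{\eta_n:Y_n\to N(H)_{n-1}\}$ defines the simplicial set $N(H)\times_\eta Y$ with simplices $N(H)_n\times Y_n$, faces $d_i(g,y)=(d_ig,d_iy)$ for $i>0$, $d_0(g,y)=(d_0g+\eta_n(y),d_0y)$, degeneracies componentwise. A normalized 2-cocycle is $\beta:Y_2\to H$ vanishing on degenerate simplices with $\beta(d_0\sigma)-\beta(d_1\sigma)+\beta(d_2\sigma)-\beta(d_3\sigma)=0$ for $\sigma\in Y_3$; its associated twisting function is $\eta_1=0$, $\eta_2=\beta$, $\eta_n(y)=\big(\beta(d_3\cdots d_n y),\ \eta_{n-1}(d_1y)-\eta_{n-1}(d_0y)\big)\in H\times H^{n-2}$. Since $j\circ i$ factors through a point, $\eta|_X$ vanishes on $Z$, so the restriction of $N(H)\times_{\eta|_X}X$ to $Z$ is $N(H)\times Z$ and $p\circ i$ is a distribution on it. *)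

theory Defs
  imports Complex_Main
begin

text \<open>cells X n is the set of n-simplices; face X n i : X_n -> X_(n-1) (i <= n, n > 0);
  degen X n j : X_n -> X_(n+1) (j <= n).\<close>

record 'a sset =
  cells :: "nat \<Rightarrow> 'a set"
  face  :: "nat \<Rightarrow> nat \<Rightarrow> 'a \<Rightarrow> 'a"
  degen :: "nat \<Rightarrow> nat \<Rightarrow> 'a \<Rightarrow> 'a"

definition simplicial_set :: "'a sset \<Rightarrow> bool" where
  "simplicial_set X \<longleftrightarrow>
     (\<forall>n i x. 0 < n \<and> i \<le> n \<and> x \<in> cells X n \<longrightarrow> face X n i x \<in> cells X (n - 1)) \<and>
     (\<forall>n j x. j \<le> n \<and> x \<in> cells X n \<longrightarrow> degen X n j x \<in> cells X (Suc n)) \<and>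
     (\<forall>n i j x. 2 \<le> n \<and> i < j \<and> j \<le> n \<and> x \<in> cells X n \<longrightarrow>
        face X (n - 1) i (face X n j x) = face X (n - 1) (j - 1) (face X n i x)) \<and>
     (\<forall>n i j x. i < j \<and> j \<le> n \<and> x \<in> cells X n \<longrightarrow>
        face X (Suc n) i (degen X n j x) = degen X (n - 1) (j - 1) (face X n i x)) \<and>
     (\<forall>n j x. j \<le> n \<and> x \<in> cells X n \<longrightarrow>
        face X (Suc n) j (degen X n j x) = x \<and> face X (Suc n) (Suc j) (degen X n j x) = x) \<and>
     (\<forall>n i j x. Suc j < i \<and> i \<le> Suc n \<and> x \<in> cells X n \<longrightarrow>
        face X (Suc n) i (degen X n j x) = degen X (n - 1) j (face X n (i - 1) x)) \<and>
     (\<forall>n i j x. i \<le> j \<and> j \<le> n \<and> x \<in> cells X n \<longrightarrow>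
        degen X (Suc n) i (degen X n j x) = degen X (Suc n) (Suc j) (degen X n i x))"

definition simplicial_subset :: "'a sset \<Rightarrow> (nat \<Rightarrow> 'a set) \<Rightarrow> bool" where
  "simplicial_subset X Z \<longleftrightarrow>
     (\<forall>n. Z n \<subseteq> cells X n) \<and>
     (\<forall>n i z. 0 < n \<and> i \<le> n \<and> z \<in> Z n \<longrightarrow> face X n i z \<in> Z (n - 1)) \<and>
     (\<forall>n j z. j \<le> n \<and> z \<in> Z n \<longrightarrow> degen X n j z \<in> Z (Suc n))"

section \<open>The quotient X/Z (Z collapsed to the point None)\<close>

definition quot_map :: "(nat \<Rightarrow> 'a set) \<Rightarrow> nat \<Rightarrow> 'a \<Rightarrow> 'a option" where
  "quot_map Z n x = (if x \<in> Z n then None else Some x)"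

definition quotient_sset :: "'a sset \<Rightarrow> (nat \<Rightarrow> 'a set) \<Rightarrow> 'a option sset" where
  "quotient_sset X Z =
     \<lparr> cells = (\<lambda>n. insert None (Some ` (cells X n - Z n))),
       face = (\<lambda>n i y. case y of None \<Rightarrow> None
                         | Some x \<Rightarrow> quot_map Z (n - 1) (face X n i x)),
       degen = (\<lambda>n j y. case y of None \<Rightarrow> None
                         | Some x \<Rightarrow> quot_map Z (Suc n) (degen X n j x)) \<rparr>"

text \<open>N(H)_n = H^n, represented as lists of length n.\<close>

definition nerve_face :: "nat \<Rightarrow> nat \<Rightarrow> 'h::ab_group_add list \<Rightarrow> 'h list" where
  "nerve_face n i g =
     (if i = 0 then tl g
      else if i = n then butlast g
      else take (i - 1) g @ [g ! (i - 1) + g ! i] @ drop (i + 1) g)"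

definition nerve_degen :: "nat \<Rightarrow> 'h::ab_group_add list \<Rightarrow> 'h list" where
  "nerve_degen j g = take j g @ [0] @ drop j g"

text \<open>Twisted product N(H) x_eta Y, with eta n : Y_n -> N(H)_(n-1).\<close>

definition twisted_prod :: "'y sset \<Rightarrow> (nat \<Rightarrow> 'y \<Rightarrow> 'h::ab_group_add list) \<Rightarrow> ('h list \<times> 'y) sset" where
  "twisted_prod Y eta =
     \<lparr> cells = (\<lambda>n. {(g, y). length g = n \<and> y \<in> cells Y n}),
       face = (\<lambda>n i (g, y). if i = 0 then (map2 (+) (tl g) (eta n y), face Y n 0 y)
                            else (nerve_face n i g, face Y n i y)),
       degen = (\<lambda>n j (g, y). (nerve_degen j g, degen Y n j y)) \<rparr>"

definition normalized_2_cocycle :: "'y sset \<Rightarrow> ('y \<Rightarrow> 'h::ab_group_add) \<Rightarrow> bool" where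
  "normalized_2_cocycle Y \<beta> \<longleftrightarrow>
     (\<forall>y \<in> cells Y 1. \<forall>j \<le> 1. \<beta> (degen Y 1 j y) = 0) \<and>
     (\<forall>\<sigma> \<in> cells Y 3. \<beta> (face Y 3 0 \<sigma>) - \<beta> (face Y 3 1 \<sigma>) + \<beta> (face Y 3 2 \<sigma>) - \<beta> (face Y 3 3 \<sigma>) = 0)"

fun front2 :: "'y sset \<Rightarrow> nat \<Rightarrow> 'y \<Rightarrow> 'y" where
  "front2 Y n y = (if n \<le> 2 then y else front2 Y (n - 1) (face Y n n y))"

fun cocycle_twist :: "'y sset \<Rightarrow> ('y \<Rightarrow> 'h::ab_group_add) \<Rightarrow> nat \<Rightarrow> 'y \<Rightarrow> 'h list" where
  "cocycle_twist Y \<beta> 0 y = []"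
| "cocycle_twist Y \<beta> (Suc 0) y = []"
| "cocycle_twist Y \<beta> (Suc (Suc 0)) y = [\<beta> y]"
| "cocycle_twist Y \<beta> (Suc (Suc (Suc m))) y =
     \<beta> (front2 Y (Suc (Suc (Suc m))) y) #
       map2 (-) (cocycle_twist Y \<beta> (Suc (Suc m)) (face Y (Suc (Suc (Suc m))) 1 y))
                (cocycle_twist Y \<beta> (Suc (Suc m)) (face Y (Suc (Suc (Suc m))) 0 y))"

definition is_dist :: "'a set \<Rightarrow> ('a \<Rightarrow> real) \<Rightarrow> bool" where
  "is_dist S p \<longleftrightarrow> (\<forall>a. 0 \<le> p a) \<and> finite {a. p a \<noteq> 0} \<and> {a. p a \<noteq> 0} \<subseteq> S
                   \<and> (\<Sum>a\<in>{a. p a \<noteq> 0}. p a) = 1"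

definition pushfwd :: "('a \<Rightarrow> 'b) \<Rightarrow> ('a \<Rightarrow> real) \<Rightarrow> 'b \<Rightarrow> real" where
  "pushfwd f p b = (\<Sum>a\<in>{a. p a \<noteq> 0 \<and> f a = b}. p a)"

definition delta :: "'a \<Rightarrow> 'a \<Rightarrow> real" where
  "delta x = (\<lambda>b. if b = x then 1 else 0)"

text \<open>Twisted distributions on pi : E -> Y: simplicial maps p : Y -> D(E) with D(pi) o p = delta.
  p n y is the distribution on E_n assigned to y in Y_n; off the carrier p is 0 (extensionality).\<close>

definition twisted_dists :: "'e sset \<Rightarrow> 'y sset \<Rightarrow> ('e \<Rightarrow> 'y) \<Rightarrow> (nat \<Rightarrow> 'y \<Rightarrow> 'e \<Rightarrow> real) set" where
  "twisted_dists E Y \<pi> = {p.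
     (\<forall>n y. y \<notin> cells Y n \<longrightarrow> p n y = (\<lambda>_. 0)) \<and>
     (\<forall>n. \<forall>y \<in> cells Y n. is_dist (cells E n) (p n y)) \<and>
     (\<forall>n i. \<forall>y \<in> cells Y n. 0 < n \<and> i \<le> n \<longrightarrow>
        pushfwd (face E n i) (p n y) = p (n - 1) (face Y n i y)) \<and>
     (\<forall>n j. \<forall>y \<in> cells Y n. j \<le> n \<longrightarrow>
        pushfwd (degen E n j) (p n y) = p (Suc n) (degen Y n j y)) \<and>
     (\<forall>n. \<forall>y \<in> cells Y n. pushfwd \<pi> (p n y) = delta y)}"

definition sDist_quot :: "'a sset \<Rightarrow> (nat \<Rightarrow> 'a set) \<Rightarrow> ('a option \<Rightarrow> 'h::ab_group_add)
    \<Rightarrow> (nat \<Rightarrow> 'a option \<Rightarrow> 'h list \<times> 'a option \<Rightarrow> real) set" where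
  "sDist_quot X Z \<beta> =
     twisted_dists (twisted_prod (quotient_sset X Z) (cocycle_twist (quotient_sset X Z) \<beta>))
                   (quotient_sset X Z) snd"

definition sDist_rel :: "'a sset \<Rightarrow> (nat \<Rightarrow> 'a set) \<Rightarrow> ('a option \<Rightarrow> 'h::ab_group_add)
    \<Rightarrow> (nat \<Rightarrow> 'a \<Rightarrow> 'h list \<times> 'a \<Rightarrow> real) set" where
  "sDist_rel X Z \<beta> =
     {p \<in> twisted_dists
            (twisted_prod X (\<lambda>n x. cocycle_twist (quotient_sset X Z) \<beta> n (quot_map Z n x))) X snd.
        \<forall>n. \<forall>z \<in> Z n. p n z = delta (replicate n 0, z)}"

definition convex_comb :: "real \<Rightarrow> (nat \<Rightarrow> 'y \<Rightarrow> 'e \<Rightarrow> real) \<Rightarrow> (nat \<Rightarrow> 'y \<Rightarrow> 'e \<Rightarrow> real)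
    \<Rightarrow> (nat \<Rightarrow> 'y \<Rightarrow> 'e \<Rightarrow> real)" where
  "convex_comb t p q = (\<lambda>n y e. t * p n y e + (1 - t) * q n y e)"

definition convex_iso where
  "convex_iso F A B \<longleftrightarrow> bij_betw F A B \<and>
     (\<forall>p \<in> A. \<forall>q \<in> A. \<forall>t::real. 0 \<le> t \<and> t \<le> 1 \<longrightarrow>
        F (convex_comb t p q) = convex_comb t (F p) (F q))"

end

theory Submission
  imports Defs
begin


definition fibd :: "'y \<Rightarrow> ('h list \<Rightarrow> real) \<Rightarrow> ('h list \<times> 'y \<Rightarrow> real)" where
  "fibd y r = (\<lambda>e. if snd e = y then r (fst e) else 0)"

definition nf :: "(nat \<Rightarrow> 'y \<Rightarrow> 'h::ab_group_add list) \<Rightarrow> nat \<Rightarrow> nat \<Rightarrow> 'y \<Rightarrow> 'h list \<Rightarrow> 'h list" where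
  "nf eta n i y g = (if i = 0 then map2 (+) (tl g) (eta n y) else nerve_face n i g)"

definition Rof :: "(nat \<Rightarrow> 'y \<Rightarrow> 'h list \<times> 'y \<Rightarrow> real) \<Rightarrow> nat \<Rightarrow> 'y \<Rightarrow> 'h list \<Rightarrow> real" where
  "Rof p n y g = p n y (g, y)"

definition clsd :: "'y sset \<Rightarrow> bool" where
  "clsd Y \<longleftrightarrow> (\<forall>n i x. 0 < n \<and> i \<le> n \<and> x \<in> cells Y n \<longrightarrow> face Y n i x \<in> cells Y (n - 1)) \<and>
     (\<forall>n j x. j \<le> n \<and> x \<in> cells Y n \<longrightarrow> degen Y n j x \<in> cells Y (Suc n))"

definition fib_ok :: "'y sset \<Rightarrow> (nat \<Rightarrow> 'y \<Rightarrow> 'h::ab_group_add list) \<Rightarrow> (nat \<Rightarrow> 'y \<Rightarrow> 'h list \<Rightarrow> real) \<Rightarrow> bool" where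
  "fib_ok Y eta R \<longleftrightarrow>
     (\<forall>n. \<forall>y \<in> cells Y n. is_dist {g. length g = n} (R n y)) \<and>
     (\<forall>n i. \<forall>y \<in> cells Y n. 0 < n \<and> i \<le> n \<longrightarrow>
        pushfwd (nf eta n i y) (R n y) = R (n - 1) (face Y n i y)) \<and>
     (\<forall>n j. \<forall>y \<in> cells Y n. j \<le> n \<longrightarrow>
        pushfwd (nerve_degen j) (R n y) = R (Suc n) (degen Y n j y))"

lemma tp_face: "face (twisted_prod Y eta) n i (g, y) = (nf eta n i y g, face Y n i y)"
  by (simp add: twisted_prod_def nf_def)

lemma tp_degen: "degen (twisted_prod Y eta) n j (g, y) = (nerve_degen j g, degen Y n j y)"
  by (simp add: twisted_prod_def)

lemma tp_cells: "cells (twisted_prod Y eta) n = {(g, y). length g = n \<and> y \<in> cells Y n}"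
  by (simp add: twisted_prod_def)

lemma pushfwd_fibd:
  assumes "\<And>g. f (g, y) = (h g, y1)"
  shows "pushfwd f (fibd y r) = fibd y1 (pushfwd h r)"
proof (rule ext, goal_cases)
  case (1 b)
  obtain g' y' where b: "b = (g', y')" by force
  show "pushfwd f (fibd y r) b = fibd y1 (pushfwd h r) b"
  proof (cases "y' = y1")
    case True
    have E: "{a. fibd y r a \<noteq> 0 \<and> f a = b} = (\<lambda>g. (g, y)) ` {g. r g \<noteq> 0 \<and> h g = g'}"
      using assms True b by (auto simp: fibd_def split: if_splits)
    have inj: "inj_on (\<lambda>g. (g, y)) A" for A by (auto simp: inj_on_def)
    have "pushfwd f (fibd y r) b = (\<Sum>a\<in>(\<lambda>g. (g, y)) ` {g. r g \<noteq> 0 \<and> h g = g'}. fibd y r a)"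
      unfolding pushfwd_def E ..
    also have "\<dots> = (\<Sum>g\<in>{g. r g \<noteq> 0 \<and> h g = g'}. r g)"
      by (simp add: sum.reindex[OF inj] fibd_def)
    finally show ?thesis using True b by (simp add: pushfwd_def fibd_def)
  next
    case False
    have E: "{a. fibd y r a \<noteq> 0 \<and> f a = b} = {}"
      using assms False b by (auto simp: fibd_def split: if_splits)
    show ?thesis unfolding pushfwd_def E using False b by (simp add: fibd_def)
  qed
qed

lemma pushfwd_delta: "pushfwd h (delta a) = delta (h a)"
proof
  fix b
  have "{x. delta a x \<noteq> 0 \<and> h x = b} = (if h a = b then {a} else {})"
    by (auto simp: delta_def)
  then show "pushfwd h (delta a) b = delta (h a) b"
    by (simp add: pushfwd_def delta_def)
qed

lemma fibd_inj: "fibd y r = fibd y s \<Longrightarrow> r = s"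
proof
  fix g assume "fibd y r = fibd y s"
  then have "fibd y r (g, y) = fibd y s (g, y)" by simp
  then show "r g = s g" by (simp add: fibd_def)
qed

lemma supp_fibd: "{a. fibd y r a \<noteq> 0} = (\<lambda>g. (g, y)) ` {g. r g \<noteq> 0}"
  by (auto simp: fibd_def split: if_splits)

lemma is_dist_fibd:
  assumes "y \<in> cells Y n"
  shows "is_dist (cells (twisted_prod Y eta) n) (fibd y r) \<longleftrightarrow> is_dist {g. length g = n} r"
proof -
  have inj: "inj_on (\<lambda>g. (g, y)) A" for A by (auto simp: inj_on_def)
  have fin: "finite {a. fibd y r a \<noteq> 0} \<longleftrightarrow> finite {g. r g \<noteq> 0}"
    unfolding supp_fibd using inj finite_image_iff by blast
  have sm: "(\<Sum>a\<in>{a. fibd y r a \<noteq> 0}. fibd y r a) = (\<Sum>g\<in>{g. r g \<noteq> 0}. r g)"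
    unfolding supp_fibd by (simp add: sum.reindex[OF inj] fibd_def)
  have nn: "(\<forall>a. 0 \<le> fibd y r a) \<longleftrightarrow> (\<forall>g. 0 \<le> r g)"
    by (auto simp: fibd_def)
  have sub: "{a. fibd y r a \<noteq> 0} \<subseteq> cells (twisted_prod Y eta) n \<longleftrightarrow> {g. r g \<noteq> 0} \<subseteq> {g. length g = n}"
    unfolding supp_fibd tp_cells using assms by auto
  show ?thesis unfolding is_dist_def using fin sm nn sub by auto
qed

lemma pushfwd_snd_fibd:
  assumes "is_dist S r"
  shows "pushfwd snd (fibd y r) = delta y"
proof
  fix b
  have inj: "inj_on (\<lambda>g. (g, y)) A" for A by (auto simp: inj_on_def)
  show "pushfwd snd (fibd y r) b = delta y b"
  proof (cases "b = y")
    case True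
    have "{a. fibd y r a \<noteq> 0 \<and> snd a = b} = (\<lambda>g. (g, y)) ` {g. r g \<noteq> 0}"
      using True by (auto simp: fibd_def split: if_splits)
    then show ?thesis using True assms
      by (simp add: pushfwd_def sum.reindex[OF inj] fibd_def delta_def is_dist_def)
  next
    case False
    have E: "{a. fibd y r a \<noteq> 0 \<and> snd a = b} = {}"
      using False by (auto simp: fibd_def split: if_splits)
    show ?thesis unfolding pushfwd_def E using False by (simp add: delta_def)
  qed
qed

lemma supp_snd:
  assumes "is_dist S p" "pushfwd snd p = delta y" "snd a \<noteq> y"
  shows "p a = 0"
proof (rule ccontr)
  assume ne: "p a \<noteq> 0"
  let ?A = "{b. p b \<noteq> 0 \<and> snd b = snd a}"
  have fin: "finite ?A" using assms(1) unfolding is_dist_def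
    by (auto intro: finite_subset)
  have "p a \<le> (\<Sum>b\<in>?A. p b)"
    using fin ne assms(1) by (intro member_le_sum) (auto simp: is_dist_def)
  also have "\<dots> = pushfwd snd p (snd a)" by (simp add: pushfwd_def)
  also have "\<dots> = 0" using assms(2,3) by (simp add: delta_def)
  finally have "p a \<le> 0" .
  moreover have "0 \<le> p a" using assms(1) unfolding is_dist_def by blast
  ultimately show False using ne by simp
qed

lemma fibd_Rof:
  assumes "is_dist S (p n y)" "pushfwd snd (p n y) = delta y"
  shows "p n y = fibd y (Rof p n y)"
proof (rule ext, goal_cases)
  case (1 e)
  obtain g y' where e: "e = (g, y')" by force
  show "p n y e = fibd y (Rof p n y) e"
    using supp_snd[OF assms, of e] e by (auto simp: fibd_def Rof_def)
qed

lemma twd_intro: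
  assumes cl: "clsd Y"
    and off: "\<And>n y. y \<notin> cells Y n \<Longrightarrow> p n y = (\<lambda>_. 0)"
    and on: "\<And>n y. y \<in> cells Y n \<Longrightarrow> p n y = fibd y (R n y)"
    and ok: "fib_ok Y eta R"
  shows "p \<in> twisted_dists (twisted_prod Y eta) Y snd"
  unfolding twisted_dists_def
proof (intro CollectI conjI allI ballI impI)
  show "\<And>n y. y \<notin> cells Y n \<Longrightarrow> p n y = (\<lambda>_. 0)" by (rule off)
  fix n y assume y: "y \<in> cells Y n"
  show "is_dist (cells (twisted_prod Y eta) n) (p n y)"
    using on[OF y] is_dist_fibd[OF y, of eta "R n y"] ok y by (simp add: fib_ok_def)
  show "pushfwd snd (p n y) = delta y"
    using on[OF y] ok y by (auto simp: fib_ok_def intro: pushfwd_snd_fibd)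
next
  fix n i y assume y: "y \<in> cells Y n" and ni: "0 < n \<and> i \<le> n"
  have fy: "face Y n i y \<in> cells Y (n - 1)" using cl y ni by (simp add: clsd_def)
  have "pushfwd (face (twisted_prod Y eta) n i) (p n y) = fibd (face Y n i y) (pushfwd (nf eta n i y) (R n y))"
    unfolding on[OF y] by (rule pushfwd_fibd) (simp add: tp_face)
  also have "\<dots> = p (n - 1) (face Y n i y)"
    using ok y ni on[OF fy] by (simp add: fib_ok_def)
  finally show "pushfwd (face (twisted_prod Y eta) n i) (p n y) = p (n - 1) (face Y n i y)" .
next
  fix n j y assume y: "y \<in> cells Y n" and nj: "j \<le> n"
  have fy: "degen Y n j y \<in> cells Y (Suc n)" using cl y nj by (simp add: clsd_def)
  have "pushfwd (degen (twisted_prod Y eta) n j) (p n y) = fibd (degen Y n j y) (pushfwd (nerve_degen j) (R n y))"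
    unfolding on[OF y] by (rule pushfwd_fibd) (simp add: tp_degen)
  also have "\<dots> = p (Suc n) (degen Y n j y)"
    using ok y nj on[OF fy] by (simp add: fib_ok_def)
  finally show "pushfwd (degen (twisted_prod Y eta) n j) (p n y) = p (Suc n) (degen Y n j y)" .
qed

lemma twd_fibd:
  assumes "p \<in> twisted_dists (twisted_prod Y eta) Y snd" "y \<in> cells Y n"
  shows "p n y = fibd y (Rof p n y)"
  using assms by (intro fibd_Rof[where S="cells (twisted_prod Y eta) n"]) (auto simp: twisted_dists_def)

lemma twd_ok:
  assumes cl: "clsd Y" and p: "p \<in> twisted_dists (twisted_prod Y eta) Y snd"
  shows "fib_ok Y eta (Rof p)"
  unfolding fib_ok_def
proof (intro conjI allI ballI impI)
  fix n y assume y: "y \<in> cells Y n"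
  show "is_dist {g. length g = n} (Rof p n y)"
  proof -
    have d: "is_dist (cells (twisted_prod Y eta) n) (p n y)" using p y unfolding twisted_dists_def by blast
    show ?thesis using d unfolding twd_fibd[OF p y] is_dist_fibd[OF y] .
  qed
next
  fix n i y assume y: "y \<in> cells Y n" and ni: "0 < n \<and> i \<le> n"
  have fy: "face Y n i y \<in> cells Y (n - 1)" using cl y ni by (simp add: clsd_def)
  have "fibd (face Y n i y) (pushfwd (nf eta n i y) (Rof p n y))
      = pushfwd (face (twisted_prod Y eta) n i) (p n y)"
    unfolding twd_fibd[OF p y] by (rule pushfwd_fibd[symmetric]) (simp add: tp_face)
  also have "\<dots> = p (n - 1) (face Y n i y)" using p y ni by (simp add: twisted_dists_def)
  also have "\<dots> = fibd (face Y n i y) (Rof p (n - 1) (face Y n i y))" by (rule twd_fibd[OF p fy])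
  finally show "pushfwd (nf eta n i y) (Rof p n y) = Rof p (n - 1) (face Y n i y)" by (rule fibd_inj)
next
  fix n j y assume y: "y \<in> cells Y n" and nj: "j \<le> n"
  have fy: "degen Y n j y \<in> cells Y (Suc n)" using cl y nj by (simp add: clsd_def)
  have "fibd (degen Y n j y) (pushfwd (nerve_degen j) (Rof p n y))
      = pushfwd (degen (twisted_prod Y eta) n j) (p n y)"
    unfolding twd_fibd[OF p y] by (rule pushfwd_fibd[symmetric]) (simp add: tp_degen)
  also have "\<dots> = p (Suc n) (degen Y n j y)" using p y nj by (simp add: twisted_dists_def)
  also have "\<dots> = fibd (degen Y n j y) (Rof p (Suc n) (degen Y n j y))" by (rule twd_fibd[OF p fy])
  finally show "pushfwd (nerve_degen j) (Rof p n y) = Rof p (Suc n) (degen Y n j y)" by (rule fibd_inj)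
qed



declare front2.simps[simp del]

lemma fibd_delta: "fibd y (delta g) = delta (g, y)"
  by (auto simp: fibd_def delta_def fun_eq_iff)

lemma is_dist_delta: "a \<in> S \<Longrightarrow> is_dist S (delta a)"
proof -
  assume a: "a \<in> S"
  have E: "{b. delta a b \<noteq> 0} = {a}" by (auto simp: delta_def)
  show ?thesis unfolding is_dist_def E using a by (auto simp: delta_def)
qed

lemma dist0:
  assumes "is_dist {g. length g = 0} r"
  shows "r = delta []"
proof -
  have sub: "{g. r g \<noteq> 0} \<subseteq> {[]}" using assms by (auto simp: is_dist_def)
  have s1: "(\<Sum>g\<in>{g. r g \<noteq> 0}. r g) = 1" using assms by (simp add: is_dist_def)
  have "{g. r g \<noteq> 0} \<noteq> {}" using s1 by (metis sum.empty zero_neq_one)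
  then have E: "{g. r g \<noteq> 0} = {[]}" using sub by blast
  then have "r [] = 1" using s1 by simp
  moreover have "g \<noteq> [] \<Longrightarrow> r g = 0" for g using E by blast
  ultimately show ?thesis by (auto simp: delta_def fun_eq_iff)
qed

lemma replicate_split: "replicate a x @ [x] @ replicate b x = replicate (a + b + 1) x"
  by (simp add: replicate_add[symmetric] replicate_append_same[symmetric])

lemma nerve_face_zero:
  assumes "0 < i" "i \<le> n"
  shows "nerve_face n i (replicate n (0::'h::ab_group_add)) = replicate (n - 1) 0"
proof (cases "i = n")
  case True then show ?thesis using assms by (simp add: nerve_face_def butlast_conv_take)
next
  case False
  then have "nerve_face n i (replicate n (0::'h)) = replicate (i - 1) 0 @ [0] @ replicate (n - (i + 1)) 0"
    using assms by (simp add: nerve_face_def)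
  also have "\<dots> = replicate (n - 1) 0"
  proof -
    have e: "i - 1 + (n - (i + 1)) + 1 = n - 1" using assms False by arith
    show ?thesis by (simp only: replicate_split e)
  qed
  finally show ?thesis .
qed

lemma nerve_degen_zero: "j \<le> n \<Longrightarrow> nerve_degen j (replicate n (0::'h::ab_group_add)) = replicate (Suc n) 0"
  using replicate_split[of j "0::'h" "n - j"] by (simp add: nerve_degen_def min_def)

lemma map2_zero: "map2 f (replicate n x) (replicate m x) = replicate (min n m) (f x x)"
  by (induction n arbitrary: m) (case_tac m; simp)+

definition Fm :: "'a sset \<Rightarrow> (nat \<Rightarrow> 'a set) \<Rightarrow> (nat \<Rightarrow> 'a option \<Rightarrow> 'h list \<times> 'a option \<Rightarrow> real)
    \<Rightarrow> (nat \<Rightarrow> 'a \<Rightarrow> 'h list \<times> 'a \<Rightarrow> real)" where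
  "Fm X Z p = (\<lambda>n x. if x \<in> cells X n then fibd x (Rof p n (quot_map Z n x)) else (\<lambda>_. 0))"

definition Sq :: "(nat \<Rightarrow> 'a \<Rightarrow> 'h list \<times> 'a \<Rightarrow> real) \<Rightarrow> nat \<Rightarrow> 'a option \<Rightarrow> 'h::zero list \<Rightarrow> real" where
  "Sq q n y = (case y of None \<Rightarrow> delta (replicate n 0) | Some x \<Rightarrow> Rof q n x)"

definition Gm :: "'a sset \<Rightarrow> (nat \<Rightarrow> 'a set) \<Rightarrow> (nat \<Rightarrow> 'a \<Rightarrow> 'h::zero list \<times> 'a \<Rightarrow> real)
    \<Rightarrow> (nat \<Rightarrow> 'a option \<Rightarrow> 'h list \<times> 'a option \<Rightarrow> real)" where
  "Gm X Z q = (\<lambda>n y. if y \<in> cells (quotient_sset X Z) n then fibd y (Sq q n y) else (\<lambda>_. 0))"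

context
  fixes X :: "'a sset" and Z :: "nat \<Rightarrow> 'a set" and \<beta> :: "'a option \<Rightarrow> 'h::ab_group_add"
  assumes ss: "simplicial_set X"
    and sub: "simplicial_subset X Z"
    and coc: "normalized_2_cocycle (quotient_sset X Z) \<beta>"
begin

abbreviation "Q \<equiv> quotient_sset X Z"

lemma Q_cells: "cells Q n = insert None (Some ` (cells X n - Z n))"
  by (simp add: quotient_sset_def)

lemma Q_face_None: "face Q n i None = None"
  by (simp add: quotient_sset_def)

lemma Q_degen_None: "degen Q n j None = None"
  by (simp add: quotient_sset_def)

lemma quot_cells: "x \<in> cells X n \<Longrightarrow> quot_map Z n x \<in> cells Q n"
  by (simp add: Q_cells quot_map_def)

lemma quot_face: "0 < n \<Longrightarrow> i \<le> n \<Longrightarrow> face Q n i (quot_map Z n x) = quot_map Z (n - 1) (face X n i x)"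
  using sub by (auto simp: quotient_sset_def quot_map_def simplicial_subset_def)

lemma quot_degen: "j \<le> n \<Longrightarrow> degen Q n j (quot_map Z n x) = quot_map Z (Suc n) (degen X n j x)"
  using sub by (auto simp: quotient_sset_def quot_map_def simplicial_subset_def)

lemma clsd_X: "clsd X" using ss by (simp add: clsd_def simplicial_set_def)

lemma Q_cases: "y \<in> cells Q n \<Longrightarrow> y = None \<or> (\<exists>x\<in>cells X n. y = quot_map Z n x)"
  by (auto simp: Q_cells quot_map_def)

lemma clsd_Q: "clsd Q"
  unfolding clsd_def
proof (intro conjI allI impI)
  fix n i y assume a: "0 < n \<and> i \<le> n \<and> y \<in> cells Q n"
  then consider "y = None" | x where "x \<in> cells X n" "y = quot_map Z n x" using Q_cases by blast
  then show "face Q n i y \<in> cells Q (n - 1)"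
  proof cases
    case 1 then show ?thesis by (simp add: Q_face_None Q_cells)
  next
    case 2 then show ?thesis using a quot_face clsd_X quot_cells by (simp add: clsd_def)
  qed
next
  fix n j y assume a: "j \<le> n \<and> y \<in> cells Q n"
  then consider "y = None" | x where "x \<in> cells X n" "y = quot_map Z n x" using Q_cases by blast
  then show "degen Q n j y \<in> cells Q (Suc n)"
  proof cases
    case 1 then show ?thesis by (simp add: Q_degen_None Q_cells)
  next
    case 2 then show ?thesis using a quot_degen clsd_X quot_cells by (simp add: clsd_def)
  qed
qed

lemma beta_None: "\<beta> None = 0"
proof -
  have "None \<in> cells Q 1" by (simp add: Q_cells)
  then have "\<beta> (degen Q 1 0 None) = 0" using coc by (simp add: normalized_2_cocycle_def)
  then show ?thesis by (simp add: Q_degen_None)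
qed

lemma front2_None: "front2 Q n None = None"
proof (induction n)
  case 0 then show ?case by (subst front2.simps) simp
next
  case (Suc n) then show ?case by (subst front2.simps) (simp add: Q_face_None)
qed

lemma eta_None: "cocycle_twist Q \<beta> n None = replicate (n - 1) 0"
proof (induction n rule: less_induct)
  case (less n)
  show ?case
  proof (cases n)
    case 0 then show ?thesis by simp
  next
    case (Suc n1)
    show ?thesis
    proof (cases n1)
      case 0 then show ?thesis using Suc by simp
    next
      case (Suc n2)
      show ?thesis
      proof (cases n2)
        case 0 then show ?thesis using Suc \<open>n = Suc n1\<close> by (simp add: beta_None)
      next
        case (Suc m)
        have ih: "cocycle_twist Q \<beta> (Suc (Suc m)) None = replicate (Suc m) 0"
          using less[of "Suc (Suc m)"] Suc \<open>n1 = Suc n2\<close> \<open>n = Suc n1\<close> by simp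
        show ?thesis using Suc \<open>n1 = Suc n2\<close> \<open>n = Suc n1\<close> ih
          by (simp add: front2_None beta_None Q_face_None map2_zero)
      qed
    qed
  qed
qed


abbreviation "eta \<equiv> cocycle_twist Q \<beta>"
abbreviation "etaX \<equiv> (\<lambda>n x. cocycle_twist Q \<beta> n (quot_map Z n x))"

lemma nf_X: "nf etaX n i x = nf eta n i (quot_map Z n x)"
  by (simp add: nf_def fun_eq_iff)

lemma nf_None: "0 < n \<Longrightarrow> i \<le> n \<Longrightarrow> nf eta n i None (replicate n 0) = replicate (n - 1) 0"
  by (cases "i = 0") (auto simp: nf_def eta_None map2_zero nerve_face_zero)

lemma A_ok: "p \<in> sDist_quot X Z \<beta> \<Longrightarrow> fib_ok Q eta (Rof p)"
  unfolding sDist_quot_def by (rule twd_ok[OF clsd_Q])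

lemma B_td: "q \<in> sDist_rel X Z \<beta> \<Longrightarrow> q \<in> twisted_dists (twisted_prod X etaX) X snd"
  unfolding sDist_rel_def by blast

lemma B_ok: "q \<in> sDist_rel X Z \<beta> \<Longrightarrow> fib_ok X etaX (Rof q)"
  by (rule twd_ok[OF clsd_X B_td])

lemma Rof_None:
  assumes p: "p \<in> sDist_quot X Z \<beta>"
  shows "Rof p n None = delta (replicate n 0)"
proof (induction n)
  case 0
  have "None \<in> cells Q 0" by (simp add: Q_cells)
  then have "is_dist {g. length g = 0} (Rof p 0 None)" using A_ok[OF p] unfolding fib_ok_def by blast
  then show ?case by (simp add: dist0)
next
  case (Suc n)
  have "None \<in> cells Q n" by (simp add: Q_cells)
  then have "pushfwd (nerve_degen 0) (Rof p n None) = Rof p (Suc n) (degen Q n 0 None)"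
    using A_ok[OF p] by (simp add: fib_ok_def)
  then show ?case using Suc by (simp add: Q_degen_None pushfwd_delta nerve_degen_zero)
qed

lemma Sq_quot:
  assumes q: "q \<in> sDist_rel X Z \<beta>" and x: "x \<in> cells X n"
  shows "Sq q n (quot_map Z n x) = Rof q n x"
proof (cases "x \<in> Z n")
  case True
  then have "q n x = delta (replicate n 0, x)" using q by (simp add: sDist_rel_def)
  then show ?thesis using True by (simp add: Sq_def quot_map_def Rof_def delta_def fun_eq_iff)
next
  case False then show ?thesis by (simp add: Sq_def quot_map_def)
qed

lemma F_in:
  assumes p: "p \<in> sDist_quot X Z \<beta>"
  shows "Fm X Z p \<in> sDist_rel X Z \<beta>"
proof -
  have ok: "fib_ok Q eta (Rof p)" by (rule A_ok[OF p])
  have okX: "fib_ok X etaX (\<lambda>n x. Rof p n (quot_map Z n x))"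
    unfolding fib_ok_def
  proof (intro conjI allI ballI impI)
    fix n x assume x: "x \<in> cells X n"
    show "is_dist {g. length g = n} (Rof p n (quot_map Z n x))"
      using ok quot_cells[OF x] by (simp add: fib_ok_def)
  next
    fix n i x assume x: "x \<in> cells X n" and ni: "0 < n \<and> i \<le> n"
    show "pushfwd (nf etaX n i x) (Rof p n (quot_map Z n x)) = Rof p (n - 1) (quot_map Z (n - 1) (face X n i x))"
      using ok quot_cells[OF x] ni unfolding nf_X quot_face[symmetric, OF conjunct1[OF ni] conjunct2[OF ni]]
      by (simp add: fib_ok_def)
  next
    fix n j x assume x: "x \<in> cells X n" and nj: "j \<le> n"
    show "pushfwd (nerve_degen j) (Rof p n (quot_map Z n x)) = Rof p (Suc n) (quot_map Z (Suc n) (degen X n j x))"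
      using ok quot_cells[OF x] nj unfolding quot_degen[symmetric, OF nj]
      by (simp add: fib_ok_def)
  qed
  have td: "Fm X Z p \<in> twisted_dists (twisted_prod X etaX) X snd"
    by (rule twd_intro[OF clsd_X _ _ okX]) (simp_all add: Fm_def)
  show ?thesis unfolding sDist_rel_def
  proof (intro CollectI conjI td allI ballI)
    fix n z assume z: "z \<in> Z n"
    then have "z \<in> cells X n" using sub by (auto simp: simplicial_subset_def)
    then show "Fm X Z p n z = delta (replicate n 0, z)"
      using z by (simp add: Fm_def quot_map_def Rof_None[OF p] fibd_delta)
  qed
qed

lemma G_in:
  assumes q: "q \<in> sDist_rel X Z \<beta>"
  shows "Gm X Z q \<in> sDist_quot X Z \<beta>"
proof -
  have ok: "fib_ok X etaX (Rof q)" by (rule B_ok[OF q])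
  have okQ: "fib_ok Q eta (Sq q)"
    unfolding fib_ok_def
  proof (intro conjI allI ballI impI)
    fix n y assume y: "y \<in> cells Q n"
    then consider "y = None" | x where "x \<in> cells X n" "y = quot_map Z n x" using Q_cases by blast
    then show "is_dist {g. length g = n} (Sq q n y)"
    proof cases
      case 1 then show ?thesis by (simp add: Sq_def is_dist_delta)
    next
      case 2 then show ?thesis using ok by (simp add: Sq_quot[OF q] fib_ok_def)
    qed
  next
    fix n i y assume y: "y \<in> cells Q n" and ni: "0 < n \<and> i \<le> n"
    then consider "y = None" | x where "x \<in> cells X n" "y = quot_map Z n x" using Q_cases by blast
    then show "pushfwd (nf eta n i y) (Sq q n y) = Sq q (n - 1) (face Q n i y)"
    proof cases
      case 1 then show ?thesis using ni by (simp add: Sq_def pushfwd_delta nf_None Q_face_None)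
    next
      case 2
      have fx: "face X n i x \<in> cells X (n - 1)" using clsd_X 2 ni by (simp add: clsd_def)
      have "pushfwd (nf etaX n i x) (Rof q n x) = Rof q (n - 1) (face X n i x)"
        using ok 2 ni by (simp add: fib_ok_def)
      moreover have "Sq q (n - 1) (quot_map Z (n - 1) (face X n i x)) = Rof q (n - 1) (face X n i x)"
        by (rule Sq_quot[OF q fx])
      ultimately show ?thesis using 2 ni
        by (simp add: Sq_quot[OF q] quot_face nf_X)
    qed
  next
    fix n j y assume y: "y \<in> cells Q n" and nj: "j \<le> n"
    then consider "y = None" | x where "x \<in> cells X n" "y = quot_map Z n x" using Q_cases by blast
    then show "pushfwd (nerve_degen j) (Sq q n y) = Sq q (Suc n) (degen Q n j y)"
    proof cases
      case 1 then show ?thesis using nj by (simp add: Sq_def pushfwd_delta nerve_degen_zero Q_degen_None)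
    next
      case 2
      have fx: "degen X n j x \<in> cells X (Suc n)" using clsd_X 2 nj by (simp add: clsd_def)
      have "pushfwd (nerve_degen j) (Rof q n x) = Rof q (Suc n) (degen X n j x)"
        using ok 2 nj by (simp add: fib_ok_def)
      moreover have "Sq q (Suc n) (quot_map Z (Suc n) (degen X n j x)) = Rof q (Suc n) (degen X n j x)"
        by (rule Sq_quot[OF q fx])
      ultimately show ?thesis using 2 nj
        by (simp add: Sq_quot[OF q] quot_degen)
    qed
  qed
  show ?thesis unfolding sDist_quot_def
    by (rule twd_intro[OF clsd_Q _ _ okQ]) (simp_all add: Gm_def)
qed

lemma GF:
  assumes p: "p \<in> sDist_quot X Z \<beta>"
  shows "Gm X Z (Fm X Z p) = p"
proof (rule ext, rule ext)
  fix n y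
  have td: "p \<in> twisted_dists (twisted_prod Q eta) Q snd" using p by (simp add: sDist_quot_def)
  show "Gm X Z (Fm X Z p) n y = p n y"
  proof (cases "y \<in> cells Q n")
    case True
    have "Sq (Fm X Z p) n y = Rof p n y"
    proof (cases y)
      case None then show ?thesis by (simp add: Sq_def Rof_None[OF p])
    next
      case (Some x)
      then have x: "x \<in> cells X n" "x \<notin> Z n" using True by (auto simp: Q_cells)
      show ?thesis using Some x by (simp add: Sq_def Rof_def Fm_def fibd_def quot_map_def fun_eq_iff)
    qed
    then show ?thesis using True twd_fibd[OF td True] by (simp add: Gm_def)
  next
    case False
    then show ?thesis using td by (simp add: Gm_def twisted_dists_def)
  qed
qed

lemma FG:
  assumes q: "q \<in> sDist_rel X Z \<beta>"
  shows "Fm X Z (Gm X Z q) = q"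
proof (rule ext, rule ext)
  fix n x
  have td: "q \<in> twisted_dists (twisted_prod X etaX) X snd" by (rule B_td[OF q])
  show "Fm X Z (Gm X Z q) n x = q n x"
  proof (cases "x \<in> cells X n")
    case True
    have "Rof (Gm X Z q) n (quot_map Z n x) = Rof q n x"
      using quot_cells[OF True] Sq_quot[OF q True]
      by (simp add: Rof_def Gm_def fibd_def fun_eq_iff)
    then show ?thesis using True twd_fibd[OF td True] by (simp add: Fm_def)
  next
    case False
    then show ?thesis using td by (simp add: Fm_def twisted_dists_def)
  qed
qed

lemma F_convex: "Fm X Z (convex_comb t p q) = convex_comb t (Fm X Z p) (Fm X Z q)"
  by (simp add: Fm_def convex_comb_def fibd_def Rof_def fun_eq_iff)

lemma main_iso: "convex_iso (Fm X Z) (sDist_quot X Z \<beta>) (sDist_rel X Z \<beta>)"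
  unfolding convex_iso_def
proof (intro conjI ballI allI impI)
  show "bij_betw (Fm X Z) (sDist_quot X Z \<beta>) (sDist_rel X Z \<beta>)"
    by (rule bij_betw_byWitness[where f'="Gm X Z"]) (auto simp: GF FG F_in G_in)
qed (rule F_convex)

end


theorem mainTheorem2:
  fixes X :: "'a sset" and Z :: "nat \<Rightarrow> 'a set" and \<beta> :: "'a option \<Rightarrow> 'h::ab_group_add"
  assumes "simplicial_set X"
    and "simplicial_subset X Z"
    and "normalized_2_cocycle (quotient_sset X Z) \<beta>"
  shows "\<exists>F. convex_iso F (sDist_quot X Z \<beta>) (sDist_rel X Z \<beta>)"
  using main_iso[OF assms] by blast

end
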